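(* Let $G$ be a $B_2$-EPG graph given with a representation, let $a$ be a row, and let $X$ be a nonempty clique of $G$ consisting only of U-vertices, all with index $\{a\}$. Then there is a set $S_t$ of at most three typed intervals such that: (1) $S_t$ contains exactly one horizontal typed interval (on row $a$) and at most two vertical typed intervals; (2) every vertex of $X$ contains every typed interval of $S_t$; (3) a Z-vertex $u$ is adjacent to every vertex of $X$ if and only if $u$ intersects at least one of the typed intervals of $S_t$.
   Context: A graph $G$ is a $B_k$-EPG graph if each vertex $u$ can be assigned a path $P_u$ in the planar orthogonal grid with at most $k$ bends such that $uv\in E(G)$ iff $P_u$ and $P_v$ share at least one grid edge (a representation); for $B_2$-EPG graphs one assumes w.l.o.g. every path has exactly two bends. A vertex $u$ intersects a row (column) if $P_u$ contains a grid edge of it; the index of $u$ is the set of rows it intersects. A Z-vertex intersects exactly two rows and one column; a U-vertex intersects exactly one row and two columns. If $a$ is in the index of $u$, $P_u^a$ is the segment of row $a$ between the two points of row $a$ where $P_u$ stops or bends. Types: $\emptyset$, $\mathsf d$, $\mathsf u$. A typed interval on row $a$ is $[x\alpha, y\beta]$ with $\alpha\le\beta$ points of row $a$ and $x,y$ types. For typed intervals $t=[x\alpha,y\beta]$, $t'=[x'\alpha',y'\beta']$ on row $a$ and an endpoint $z\gamma\in\{x'\alpha',y'\beta'\}$ of $t'$, $t$ is coherent with $z\gamma$ if (i) $\gamma\in(\alpha,\beta)$ (open interval), or (ii) $z=\emptyset$ and $[\alpha,\beta]$ contains the grid edge of $[\alpha',\beta']$ incident to $\gamma$, or (iii) $z\neq\emptyset$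 and $z\gamma\in\{x\alpha,y\beta\}$. $t$ contains $t'$ if $[\alpha',\beta']\subseteq[\alpha,\beta]$ and $t$ is coherent with both endpoints of $t'$. $t$ intersects $t'$ if $[\alpha,\beta]\cap[\alpha',\beta']$ contains a grid edge, or $t$ is coherent with an endpoint of $t'$, or $t'$ is coherent with an endpoint of $t$. The t-projection of $u$ on $a$ is $[x\alpha,y\beta]$ where $\alpha,\beta$ are the endpoints of $P_u^a$ and the type of an endpoint $\gamma$ is $\emptyset$ if $P_u$ ends at $\gamma$, $\mathsf d$ if $P_u$ bends downwards at $\gamma$, $\mathsf u$ if upwards. A vertex $u$ contains (intersects) a typed interval $t$ on row $a$ if $a$ is in the index of $u$ and its t-projection on $a$ contains (intersects) $t$. Typed intervals on rows are called horizontal typed intervals. Vertical typed intervals (on a column), the t-projection of a vertex on a column it intersects, and containment/intersection of vertical typed intervals by vertices are defined identically after rotating the grid by $90^\circ$ (columns becoming rows). *)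

theory Defs
  imports Main
begin

(* Grid points: (x, y) with x the column coordinate and y the row coordinate.
   Row a = horizontal grid line y = a; column c = vertical grid line x = c.
   "Downwards" means towards smaller y. *)
type_synonym pt = "int \<times> int"

(* types of endpoints: TE = \<emptyset> (path ends), TD = d (bends downwards), TU = u (bends upwards) *)
datatype ttype = TE | TD | TU

(* typed interval [x\<alpha>, y\<beta>] on a line, stored as (x, \<alpha>, y, \<beta>) *)
type_synonym tiv = "ttype \<times> int \<times> ttype \<times> int"

datatype orient = Hor | Ver

(* a typed interval together with its line: (Hor, a, t) is on row a, (Ver, c, t) on column c *)
type_synonym ltiv = "orient \<times> int \<times> tiv"

definition wf_tiv :: "tiv \<Rightarrow> bool" where
  "wf_tiv t = (case t of (x, \<alpha>, y, \<beta>) \<Rightarrow> \<alpha> \<le> \<beta>)"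

(* t is coherent with the left endpoint x'\<alpha>' of t' *)
definition coh_L :: "tiv \<Rightarrow> tiv \<Rightarrow> bool" where
  "coh_L t t' = (case t of (x, \<alpha>, y, \<beta>) \<Rightarrow> case t' of (x', \<alpha>', y', \<beta>') \<Rightarrow>
      (\<alpha> < \<alpha>' \<and> \<alpha>' < \<beta>)
    \<or> (x' = TE \<and> \<alpha>' < \<beta>' \<and> \<alpha> \<le> \<alpha>' \<and> \<alpha>' + 1 \<le> \<beta>)
    \<or> (x' \<noteq> TE \<and> ((x', \<alpha>') = (x, \<alpha>) \<or> (x', \<alpha>') = (y, \<beta>))))"

(* t is coherent with the right endpoint y'\<beta>' of t' *)
definition coh_R :: "tiv \<Rightarrow> tiv \<Rightarrow> bool" where
  "coh_R t t' = (case t of (x, \<alpha>, y, \<beta>) \<Rightarrow> case t' of (x', \<alpha>', y', \<beta>') \<Rightarrow>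
      (\<alpha> < \<beta>' \<and> \<beta>' < \<beta>)
    \<or> (y' = TE \<and> \<alpha>' < \<beta>' \<and> \<alpha> \<le> \<beta>' - 1 \<and> \<beta>' \<le> \<beta>)
    \<or> (y' \<noteq> TE \<and> ((y', \<beta>') = (x, \<alpha>) \<or> (y', \<beta>') = (y, \<beta>))))"

definition contains_ti :: "tiv \<Rightarrow> tiv \<Rightarrow> bool" where
  "contains_ti t t' = (case t of (x, \<alpha>, y, \<beta>) \<Rightarrow> case t' of (x', \<alpha>', y', \<beta>') \<Rightarrow>
      \<alpha> \<le> \<alpha>' \<and> \<beta>' \<le> \<beta> \<and> coh_L t t' \<and> coh_R t t')"

definition intersects_ti :: "tiv \<Rightarrow> tiv \<Rightarrow> bool" where
  "intersects_ti t t' = (case t of (x, \<alpha>, y, \<beta>) \<Rightarrow> case t' of (x', \<alpha>', y', \<beta>') \<Rightarrow>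
      max \<alpha> \<alpha>' + 1 \<le> min \<beta> \<beta>'
    \<or> coh_L t t' \<or> coh_R t t' \<or> coh_L t' t \<or> coh_R t' t)"

(* grid edges are unordered pairs of grid-adjacent points *)
definition seg_edges :: "pt \<Rightarrow> pt \<Rightarrow> pt set set" where
  "seg_edges p q =
    (if snd p = snd q then
       {{(i, snd p), (i + 1, snd p)} | i. min (fst p) (fst q) \<le> i \<and> i < max (fst p) (fst q)}
     else if fst p = fst q then
       {{(fst p, j), (fst p, j + 1)} | j. min (snd p) (snd q) \<le> j \<and> j < max (snd p) (snd q)}
     else {})"

(* a path is given by its list of points: start, bend points, end *)
definition path_edges :: "pt list \<Rightarrow> pt set set" where
  "path_edges ps = (\<Union>i \<in> {i. Suc i < length ps}. seg_edges (ps ! i) (ps ! Suc i))"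

definition is_B2_path :: "pt list \<Rightarrow> bool" where
  "is_B2_path ps = (length ps = 4
     \<and> (\<forall>i<3. ps ! i \<noteq> ps ! Suc i \<and>
              (fst (ps ! i) = fst (ps ! Suc i) \<or> snd (ps ! i) = snd (ps ! Suc i)))
     \<and> (\<forall>i<2. (fst (ps ! i) = fst (ps ! Suc i)) \<noteq> (fst (ps ! Suc i) = fst (ps ! Suc (Suc i)))))"

definition row_edge :: "int \<Rightarrow> pt set \<Rightarrow> bool" where
  "row_edge a e = (\<exists>i. e = {(i, a), (i + 1, a)})"

(* index of a vertex: the rows it intersects *)
definition row_index :: "pt list \<Rightarrow> int set" where
  "row_index ps = {a. \<exists>e \<in> path_edges ps. row_edge a e}"

(* rotation of the grid by 90 degrees: column c becomes row c *)
definition rot :: "pt \<Rightarrow> pt" where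
  "rot p = (- snd p, fst p)"

definition col_index :: "pt list \<Rightarrow> int set" where
  "col_index ps = row_index (map rot ps)"

definition Z_vertex :: "pt list \<Rightarrow> bool" where
  "Z_vertex ps = (card (row_index ps) = 2 \<and> card (col_index ps) = 1)"

definition U_vertex :: "pt list \<Rightarrow> bool" where
  "U_vertex ps = (card (row_index ps) = 1 \<and> card (col_index ps) = 2)"

definition horiz_seg :: "pt list \<Rightarrow> int \<Rightarrow> nat \<Rightarrow> bool" where
  "horiz_seg ps a i = (Suc i < length ps \<and> snd (ps ! i) = a \<and> snd (ps ! Suc i) = a
                        \<and> fst (ps ! i) \<noteq> fst (ps ! Suc i))"

(* type of a bend at point p whose other segment goes to q *)
definition bend_ty :: "pt \<Rightarrow> pt \<Rightarrow> ttype" where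
  "bend_ty q p = (if snd q < snd p then TD else TU)"

definition seg_tproj :: "pt list \<Rightarrow> nat \<Rightarrow> tiv" where
  "seg_tproj ps i =
    (let x1 = fst (ps ! i); x2 = fst (ps ! Suc i);
         t1 = (if i = 0 then TE else bend_ty (ps ! (i - 1)) (ps ! i));
         t2 = (if Suc (Suc i) < length ps then bend_ty (ps ! Suc (Suc i)) (ps ! Suc i) else TE)
     in if x1 \<le> x2 then (t1, x1, t2, x2) else (t2, x2, t1, x1))"

definition tproj_row :: "pt list \<Rightarrow> int \<Rightarrow> tiv" where
  "tproj_row ps a = seg_tproj ps (THE i. horiz_seg ps a i)"

definition tproj_col :: "pt list \<Rightarrow> int \<Rightarrow> tiv" where
  "tproj_col ps c = tproj_row (map rot ps) c"

fun v_contains :: "pt list \<Rightarrow> ltiv \<Rightarrow> bool" where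
  "v_contains ps (Hor, a, t) = (a \<in> row_index ps \<and> contains_ti (tproj_row ps a) t)"
| "v_contains ps (Ver, c, t) = (c \<in> col_index ps \<and> contains_ti (tproj_col ps c) t)"

fun v_intersects :: "pt list \<Rightarrow> ltiv \<Rightarrow> bool" where
  "v_intersects ps (Hor, a, t) = (a \<in> row_index ps \<and> intersects_ti (tproj_row ps a) t)"
| "v_intersects ps (Ver, c, t) = (c \<in> col_index ps \<and> intersects_ti (tproj_col ps c) t)"

definition epg_rep :: "'v set \<Rightarrow> ('v \<Rightarrow> 'v \<Rightarrow> bool) \<Rightarrow> ('v \<Rightarrow> pt list) \<Rightarrow> bool" where
  "epg_rep V E P = ((\<forall>u\<in>V. is_B2_path (P u))
     \<and> (\<forall>u\<in>V. \<forall>v\<in>V. u \<noteq> v \<longrightarrow> (E u v \<longleftrightarrow> path_edges (P u) \<inter> path_edges (P v) \<noteq> {})))"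

end

theory Submission
  imports Defs
begin


definition hE :: "int \<Rightarrow> int \<Rightarrow> int \<Rightarrow> pt set set" where
  "hE y lo hi = {{(i, y), (i + 1, y)} | i. lo \<le> i \<and> i < hi}"
definition vE :: "int \<Rightarrow> int \<Rightarrow> int \<Rightarrow> pt set set" where
  "vE x lo hi = {{(x, j), (x, j + 1)} | j. lo \<le> j \<and> j < hi}"

lemma seg_h: "y = y' \<Longrightarrow> seg_edges (x,y) (x',y') = hE y (min x x') (max x x')"
  by (simp add: seg_edges_def hE_def)
lemma seg_v: "x = x' \<Longrightarrow> y \<noteq> y' \<Longrightarrow> seg_edges (x,y) (x',y') = vE x (min y y') (max y y')"
  by (simp add: seg_edges_def vE_def)

lemma path_edges4: "path_edges [p0,p1,p2,p3] = seg_edges p0 p1 \<union> seg_edges p1 p2 \<union> seg_edges p2 p3"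
proof -
  have "{i. Suc i < length [p0,p1,p2,p3]} = {0,1,2}" by auto
  then show ?thesis unfolding path_edges_def by (auto simp: numeral_eq_Suc)
qed

lemma hh_eq: "({(i::int, y::int), (i + 1, y)} = {(i', y'), (i' + 1, y')}) = (i = i' \<and> y = y')"
  by (simp add: doubleton_eq_iff) arith
lemma hv_neq: "{(i::int, y::int), (i + 1, y)} \<noteq> {(x, j), (x, j + 1)}"
  by (simp add: doubleton_eq_iff)
lemma vh_neq: "{(x::int, j::int), (x, j + 1)} \<noteq> {(i, y), (i + 1, y)}"
  by (simp add: doubleton_eq_iff)
lemma vv_eq: "({(x::int, j::int), (x, j + 1)} = {(x', j'), (x', j' + 1)}) = (x = x' \<and> j = j')"
  by (simp add: doubleton_eq_iff) arith

lemma hE_hE: "(hE y lo hi \<inter> hE y' lo' hi' \<noteq> {}) = (y = y' \<and> max lo lo' < min hi hi')"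
proof
  assume "hE y lo hi \<inter> hE y' lo' hi' \<noteq> {}"
  then obtain e where "e \<in> hE y lo hi" "e \<in> hE y' lo' hi'" by blast
  then show "y = y' \<and> max lo lo' < min hi hi'" by (auto simp: hE_def hh_eq)
next
  assume "y = y' \<and> max lo lo' < min hi hi'"
  then have "{(max lo lo', y), (max lo lo' + 1, y)} \<in> hE y lo hi \<inter> hE y' lo' hi'"
    by (auto simp: hE_def)
  then show "hE y lo hi \<inter> hE y' lo' hi' \<noteq> {}" by blast
qed

lemma vE_vE: "(vE x lo hi \<inter> vE x' lo' hi' \<noteq> {}) = (x = x' \<and> max lo lo' < min hi hi')"
proof
  assume "vE x lo hi \<inter> vE x' lo' hi' \<noteq> {}"
  then obtain e where "e \<in> vE x lo hi" "e \<in> vE x' lo' hi'" by blast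
  then show "x = x' \<and> max lo lo' < min hi hi'" by (auto simp: vE_def vv_eq)
next
  assume "x = x' \<and> max lo lo' < min hi hi'"
  then have "{(x, max lo lo'), (x, max lo lo' + 1)} \<in> vE x lo hi \<inter> vE x' lo' hi'"
    by (auto simp: vE_def)
  then show "vE x lo hi \<inter> vE x' lo' hi' \<noteq> {}" by blast
qed

lemma hE_vE: "hE y lo hi \<inter> vE x lo' hi' = {}"
  by (auto simp: hE_def vE_def hv_neq)
lemma vE_hE: "vE x lo' hi' \<inter> hE y lo hi = {}"
  by (auto simp: hE_def vE_def vh_neq)

lemma rows_hE: "{b. \<exists>e\<in>hE y lo hi. row_edge b e} = (if lo < hi then {y} else {})"
  by (auto simp: hE_def row_edge_def hh_eq)
lemma rows_vE: "{b. \<exists>e\<in>vE x lo hi. row_edge b e} = {}"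
  by (auto simp: vE_def row_edge_def vh_neq)


lemma len4: "length ps = 4 \<Longrightarrow> \<exists>p0 p1 p2 p3. ps = [p0,p1,p2,p3]"
  by (cases ps; cases "tl ps"; cases "tl (tl ps)"; cases "tl (tl (tl ps))"; cases "tl (tl (tl (tl ps)))"; auto)

lemma B2_shape:
  assumes "is_B2_path ps"
  shows "(\<exists>c1 y0 b c2 y3. ps = [(c1,y0),(c1,b),(c2,b),(c2,y3)] \<and> c1 \<noteq> c2 \<and> y0 \<noteq> b \<and> y3 \<noteq> b)
       \<or> (\<exists>x0 y1 c y2 x3. ps = [(x0,y1),(c,y1),(c,y2),(x3,y2)] \<and> x0 \<noteq> c \<and> y1 \<noteq> y2 \<and> x3 \<noteq> c)"
proof -
  from assms have l: "length ps = 4" by (simp add: is_B2_path_def)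
  then obtain p0 p1 p2 p3 where ps: "ps = [p0,p1,p2,p3]" using len4 by blast
  obtain x0 y0 where p0: "p0 = (x0,y0)" by (cases p0)
  obtain x1 y1 where p1: "p1 = (x1,y1)" by (cases p1)
  obtain x2 y2 where p2: "p2 = (x2,y2)" by (cases p2)
  obtain x3 y3 where p3: "p3 = (x3,y3)" by (cases p3)
  have c: "\<forall>i<3. ps ! i \<noteq> ps ! Suc i \<and> (fst (ps ! i) = fst (ps ! Suc i) \<or> snd (ps ! i) = snd (ps ! Suc i))"
   and d: "\<forall>i<2. (fst (ps ! i) = fst (ps ! Suc i)) \<noteq> (fst (ps ! Suc i) = fst (ps ! Suc (Suc i)))"
    using assms by (auto simp: is_B2_path_def)
  from c have c0: "p0 \<noteq> p1 \<and> (fst p0 = fst p1 \<or> snd p0 = snd p1)"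
    and c1: "p1 \<noteq> p2 \<and> (fst p1 = fst p2 \<or> snd p1 = snd p2)"
    and c2: "p2 \<noteq> p3 \<and> (fst p2 = fst p3 \<or> snd p2 = snd p3)"
    by (auto simp: ps dest: spec[of _ 0] spec[of _ 1] spec[of _ 2])
  from d have d0: "(fst p0 = fst p1) \<noteq> (fst p1 = fst p2)" and d1: "(fst p1 = fst p2) \<noteq> (fst p2 = fst p3)"
    by (auto simp: ps dest: spec[of _ 0] spec[of _ 1])
  show ?thesis
  proof (cases "x0 = x1")
    case True
    then show ?thesis using c0 c1 c2 d0 d1 unfolding ps p0 p1 p2 p3 by auto
  next
    case False
    then show ?thesis using c0 c1 c2 d0 d1 unfolding ps p0 p1 p2 p3 by auto
  qed
qed

lemma HVH_edges: "x0 \<noteq> c \<Longrightarrow> y1 \<noteq> y2 \<Longrightarrow> x3 \<noteq> c \<Longrightarrow>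
  path_edges [(x0,y1),(c,y1),(c,y2),(x3,y2)] = hE y1 (min x0 c) (max x0 c) \<union> vE c (min y1 y2) (max y1 y2) \<union> hE y2 (min c x3) (max c x3)"
  by (simp add: path_edges4 seg_h seg_v)

lemma VHV_edges: "c1 \<noteq> c2 \<Longrightarrow> y0 \<noteq> b \<Longrightarrow> y3 \<noteq> b \<Longrightarrow>
  path_edges [(c1,y0),(c1,b),(c2,b),(c2,y3)] = vE c1 (min y0 b) (max y0 b) \<union> hE b (min c1 c2) (max c1 c2) \<union> vE c2 (min b y3) (max b y3)"
  by (simp add: path_edges4 seg_h seg_v)

lemma rows_Un: "{b. \<exists>e\<in>A \<union> B. row_edge b e} = {b. \<exists>e\<in>A. row_edge b e} \<union> {b. \<exists>e\<in>B. row_edge b e}"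
  by auto

lemma HVH_rows: "x0 \<noteq> c \<Longrightarrow> y1 \<noteq> y2 \<Longrightarrow> x3 \<noteq> c \<Longrightarrow>
  row_index [(x0,y1),(c,y1),(c,y2),(x3,y2)] = {y1, y2}"
  unfolding row_index_def by (auto simp add: HVH_edges rows_Un rows_hE rows_vE)

lemma VHV_rows: "c1 \<noteq> c2 \<Longrightarrow> y0 \<noteq> b \<Longrightarrow> y3 \<noteq> b \<Longrightarrow>
  row_index [(c1,y0),(c1,b),(c2,b),(c2,y3)] = {b}"
  unfolding row_index_def by (auto simp add: VHV_edges rows_Un rows_hE rows_vE)

lemma less3: "(i::nat) < 3 \<longleftrightarrow> i = 0 \<or> i = 1 \<or> i = 2" by auto

lemma HVH_hs: "x0 \<noteq> c \<Longrightarrow> y1 \<noteq> y2 \<Longrightarrow> x3 \<noteq> c \<Longrightarrow>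
  horiz_seg [(x0,y1),(c,y1),(c,y2),(x3,y2)] r i \<longleftrightarrow> (i = 0 \<and> r = y1) \<or> (i = 2 \<and> r = y2)"
  unfolding horiz_seg_def by (cases i; cases "i - 1"; cases "i - 2"; auto)

lemma VHV_hs: "c1 \<noteq> c2 \<Longrightarrow> y0 \<noteq> b \<Longrightarrow> y3 \<noteq> b \<Longrightarrow>
  horiz_seg [(c1,y0),(c1,b),(c2,b),(c2,y3)] r i \<longleftrightarrow> (i = 1 \<and> r = b)"
  unfolding horiz_seg_def by (cases i; cases "i - 1"; cases "i - 2"; auto)

lemma HVH_tp1: "x0 \<noteq> c \<Longrightarrow> y1 \<noteq> y2 \<Longrightarrow> x3 \<noteq> c \<Longrightarrow>
  tproj_row [(x0,y1),(c,y1),(c,y2),(x3,y2)] y1 =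
   (let t = bend_ty (c,y2) (c,y1) in if x0 \<le> c then (TE,x0,t,c) else (t,c,TE,x0))"
proof -
  assume h: "x0 \<noteq> c" "y1 \<noteq> y2" "x3 \<noteq> c"
  have "(THE i. horiz_seg [(x0,y1),(c,y1),(c,y2),(x3,y2)] y1 i) = 0"
    using h by (simp add: HVH_hs)
  then show ?thesis unfolding tproj_row_def by (simp add: seg_tproj_def Let_def)
qed

lemma HVH_tp2: "x0 \<noteq> c \<Longrightarrow> y1 \<noteq> y2 \<Longrightarrow> x3 \<noteq> c \<Longrightarrow>
  tproj_row [(x0,y1),(c,y1),(c,y2),(x3,y2)] y2 =
   (let t = bend_ty (c,y1) (c,y2) in if c \<le> x3 then (t,c,TE,x3) else (TE,x3,t,c))"
proof -
  assume h: "x0 \<noteq> c" "y1 \<noteq> y2" "x3 \<noteq> c"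
  have "(THE i. horiz_seg [(x0,y1),(c,y1),(c,y2),(x3,y2)] y2 i) = 2"
    using h by (simp add: HVH_hs)
  then show ?thesis unfolding tproj_row_def by (simp add: seg_tproj_def Let_def numeral_eq_Suc)
qed

lemma VHV_tp: "c1 \<noteq> c2 \<Longrightarrow> y0 \<noteq> b \<Longrightarrow> y3 \<noteq> b \<Longrightarrow>
  tproj_row [(c1,y0),(c1,b),(c2,b),(c2,y3)] b =
   (let t1 = bend_ty (c1,y0) (c1,b); t2 = bend_ty (c2,y3) (c2,b) in if c1 \<le> c2 then (t1,c1,t2,c2) else (t2,c2,t1,c1))"
proof -
  assume h: "c1 \<noteq> c2" "y0 \<noteq> b" "y3 \<noteq> b"
  have "(THE i. horiz_seg [(c1,y0),(c1,b),(c2,b),(c2,y3)] b i) = 1"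
    using h by (simp add: VHV_hs)
  then show ?thesis unfolding tproj_row_def by (simp add: seg_tproj_def Let_def)
qed

lemma rot_VHV: "map rot [(c1,y0),(c1,b),(c2,b),(c2,y3)] = [(-y0,c1),(-b,c1),(-b,c2),(-y3,c2)]"
  by (simp add: rot_def)
lemma rot_HVH: "map rot [(x0,y1),(c,y1),(c,y2),(x3,y2)] = [(-y1,x0),(-y1,c),(-y2,c),(-y2,x3)]"
  by (simp add: rot_def)

lemma VHV_cols: "c1 \<noteq> c2 \<Longrightarrow> y0 \<noteq> b \<Longrightarrow> y3 \<noteq> b \<Longrightarrow>
  col_index [(c1,y0),(c1,b),(c2,b),(c2,y3)] = {c1, c2}"
  unfolding col_index_def rot_VHV by (rule HVH_rows) auto

lemma HVH_cols: "x0 \<noteq> c \<Longrightarrow> y1 \<noteq> y2 \<Longrightarrow> x3 \<noteq> c \<Longrightarrow>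
  col_index [(x0,y1),(c,y1),(c,y2),(x3,y2)] = {c}"
  unfolding col_index_def rot_HVH by (rule VHV_rows) auto

lemma VHV_tc1: "c1 \<noteq> c2 \<Longrightarrow> y0 \<noteq> b \<Longrightarrow> y3 \<noteq> b \<Longrightarrow>
  tproj_col [(c1,y0),(c1,b),(c2,b),(c2,y3)] c1 =
   (let t = bend_ty (-b,c2) (-b,c1) in if -y0 \<le> -b then (TE,-y0,t,-b) else (t,-b,TE,-y0))"
  unfolding tproj_col_def rot_VHV by (rule HVH_tp1) auto

lemma VHV_tc2: "c1 \<noteq> c2 \<Longrightarrow> y0 \<noteq> b \<Longrightarrow> y3 \<noteq> b \<Longrightarrow>
  tproj_col [(c1,y0),(c1,b),(c2,b),(c2,y3)] c2 =
   (let t = bend_ty (-b,c1) (-b,c2) in if -b \<le> -y3 then (t,-b,TE,-y3) else (TE,-y3,t,-b))"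
  unfolding tproj_col_def rot_VHV by (rule HVH_tp2) auto

lemma HVH_tc: "x0 \<noteq> c \<Longrightarrow> y1 \<noteq> y2 \<Longrightarrow> x3 \<noteq> c \<Longrightarrow>
  tproj_col [(x0,y1),(c,y1),(c,y2),(x3,y2)] c =
   (let t1 = bend_ty (-y1,x0) (-y1,c); t2 = bend_ty (-y2,x3) (-y2,c) in if -y1 \<le> -y2 then (t1,-y1,t2,-y2) else (t2,-y2,t1,-y1))"
  unfolding tproj_col_def rot_HVH by (rule VHV_tp) auto

definition bt :: "int \<Rightarrow> int \<Rightarrow> ttype" where
  "bt a y = (if y < a then TD else TU)"

definition ovl :: "int \<Rightarrow> int \<Rightarrow> int \<Rightarrow> int \<Rightarrow> bool" where
  "ovl p q s t = (max (min p q) (min s t) < min (max p q) (max s t))"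

definition UF :: "int \<Rightarrow> pt list \<Rightarrow> int \<Rightarrow> int \<Rightarrow> int \<Rightarrow> int \<Rightarrow> bool" where
  "UF a ps l r yl yr = (l < r \<and> yl \<noteq> a \<and> yr \<noteq> a \<and> row_index ps = {a} \<and> col_index ps = {l, r}
     \<and> tproj_row ps a = (bt a yl, l, bt a yr, r)
     \<and> tproj_col ps l = (if a < yl then (TE, -yl, TU, -a) else (TU, -a, TE, -yl))
     \<and> tproj_col ps r = (if a < yr then (TE, -yr, TD, -a) else (TD, -a, TE, -yr))
     \<and> path_edges ps = vE l (min yl a) (max yl a) \<union> hE a l r \<union> vE r (min a yr) (max a yr))"

definition ZF :: "pt list \<Rightarrow> int \<Rightarrow> int \<Rightarrow> int \<Rightarrow> int \<Rightarrow> int \<Rightarrow> bool" where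
  "ZF ps x0 y1 c y2 x3 = (x0 \<noteq> c \<and> y1 \<noteq> y2 \<and> x3 \<noteq> c \<and> row_index ps = {y1, y2} \<and> col_index ps = {c}
     \<and> tproj_row ps y1 = (if x0 \<le> c then (TE, x0, bt y1 y2, c) else (bt y1 y2, c, TE, x0))
     \<and> tproj_row ps y2 = (if c \<le> x3 then (bt y2 y1, c, TE, x3) else (TE, x3, bt y2 y1, c))
     \<and> tproj_col ps c = (let t1 = (if x0 < c then TD else TU); t2 = (if x3 < c then TD else TU) in
          if y2 \<le> y1 then (t1, -y1, t2, -y2) else (t2, -y2, t1, -y1))
     \<and> path_edges ps = hE y1 (min x0 c) (max x0 c) \<union> vE c (min y1 y2) (max y1 y2) \<union> hE y2 (min c x3) (max c x3))"

lemma ZF_sym: "ZF ps x0 y1 c y2 x3 \<Longrightarrow> ZF ps x3 y2 c y1 x0"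
  unfolding ZF_def Let_def
  by (auto simp: insert_commute min.commute max.commute Un_commute Un_left_commute)

lemma U_norm:
  assumes "is_B2_path ps" "U_vertex ps" "row_index ps = {a}"
  shows "\<exists>l r yl yr. UF a ps l r yl yr"
proof -
  from B2_shape[OF assms(1)] show ?thesis
  proof
    assume "\<exists>c1 y0 b c2 y3. ps = [(c1,y0),(c1,b),(c2,b),(c2,y3)] \<and> c1 \<noteq> c2 \<and> y0 \<noteq> b \<and> y3 \<noteq> b"
    then obtain c1 y0 b c2 y3 where ps: "ps = [(c1,y0),(c1,b),(c2,b),(c2,y3)]" and h: "c1 \<noteq> c2" "y0 \<noteq> b" "y3 \<noteq> b" by blast
    have b: "b = a" using assms(3) VHV_rows[OF h] ps by simp
    show ?thesis
    proof (cases "c1 < c2")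
      case True
      have "UF a ps c1 c2 y0 y3" unfolding UF_def ps b using h True b
        by (simp add: VHV_rows VHV_cols VHV_tp VHV_tc1 VHV_tc2 VHV_edges bt_def bend_ty_def Let_def)
      then show ?thesis by blast
    next
      case False
      have "UF a ps c2 c1 y3 y0" unfolding UF_def ps b using h False b
        by (auto simp add: VHV_rows VHV_cols VHV_tp VHV_tc1 VHV_tc2 VHV_edges bt_def bend_ty_def Let_def)
      then show ?thesis by blast
    qed
  next
    assume "\<exists>x0 y1 c y2 x3. ps = [(x0,y1),(c,y1),(c,y2),(x3,y2)] \<and> x0 \<noteq> c \<and> y1 \<noteq> y2 \<and> x3 \<noteq> c"
    then obtain x0 y1 c y2 x3 where ps: "ps = [(x0,y1),(c,y1),(c,y2),(x3,y2)]" and h: "x0 \<noteq> c" "y1 \<noteq> y2" "x3 \<noteq> c" by blast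
    have "card (row_index ps) = 2" using HVH_rows[OF h] ps h by simp
    then show ?thesis using assms(2) by (simp add: U_vertex_def)
  qed
qed

lemma Z_norm:
  assumes "is_B2_path ps" "Z_vertex ps"
  shows "\<exists>x0 y1 c y2 x3. ZF ps x0 y1 c y2 x3"
proof -
  from B2_shape[OF assms(1)] show ?thesis
  proof
    assume "\<exists>c1 y0 b c2 y3. ps = [(c1,y0),(c1,b),(c2,b),(c2,y3)] \<and> c1 \<noteq> c2 \<and> y0 \<noteq> b \<and> y3 \<noteq> b"
    then obtain c1 y0 b c2 y3 where ps: "ps = [(c1,y0),(c1,b),(c2,b),(c2,y3)]" and h: "c1 \<noteq> c2" "y0 \<noteq> b" "y3 \<noteq> b" by blast
    have "card (row_index ps) = 1" using VHV_rows[OF h] ps by simp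
    then show ?thesis using assms(2) by (simp add: Z_vertex_def)
  next
    assume "\<exists>x0 y1 c y2 x3. ps = [(x0,y1),(c,y1),(c,y2),(x3,y2)] \<and> x0 \<noteq> c \<and> y1 \<noteq> y2 \<and> x3 \<noteq> c"
    then obtain x0 y1 c y2 x3 where ps: "ps = [(x0,y1),(c,y1),(c,y2),(x3,y2)]" and h: "x0 \<noteq> c" "y1 \<noteq> y2" "x3 \<noteq> c" by blast
    have "ZF ps x0 y1 c y2 x3" unfolding ZF_def ps using h
      by (simp add: HVH_rows HVH_cols HVH_tp1 HVH_tp2 HVH_tc HVH_edges bt_def bend_ty_def Let_def)
    then show ?thesis by blast
  qed
qed

lemma ZU_adj:
  assumes "ZF pu x0 y1 c y2 x3" "UF a px l r yl yr"
  shows "(path_edges pu \<inter> path_edges px \<noteq> {}) \<longleftrightarrow>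
    (y1 = a \<and> ovl x0 c l r) \<or> (y2 = a \<and> ovl c x3 l r) \<or> (c = l \<and> ovl y1 y2 yl a) \<or> (c = r \<and> ovl y1 y2 a yr)"
proof -
  have e1: "path_edges pu = hE y1 (min x0 c) (max x0 c) \<union> vE c (min y1 y2) (max y1 y2) \<union> hE y2 (min c x3) (max c x3)"
    using assms(1) by (simp add: ZF_def)
  have e2: "path_edges px = vE l (min yl a) (max yl a) \<union> hE a l r \<union> vE r (min a yr) (max a yr)"
    using assms(2) by (simp add: UF_def)
  have lr: "l < r" using assms(2) by (simp add: UF_def)
  show ?thesis unfolding e1 e2 Int_Un_distrib Int_Un_distrib2 Un_empty de_Morgan_conj
    using lr by (auto simp: hE_hE vE_vE hE_vE vE_hE ovl_def)
qed

lemma UU_adj: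
  assumes "UF a p l r yl yr" "UF a p' l' r' yl' yr'"
  shows "(path_edges p \<inter> path_edges p' \<noteq> {}) \<longleftrightarrow>
    max l l' < min r r' \<or> (l = l' \<and> bt a yl = bt a yl') \<or> (l = r' \<and> bt a yl = bt a yr')
     \<or> (r = l' \<and> bt a yr = bt a yl') \<or> (r = r' \<and> bt a yr = bt a yr')"
proof -
  have e1: "path_edges p = vE l (min yl a) (max yl a) \<union> hE a l r \<union> vE r (min a yr) (max a yr)"
   and h1: "l < r" "yl \<noteq> a" "yr \<noteq> a"
    using assms(1) by (simp_all add: UF_def)
  have e2: "path_edges p' = vE l' (min yl' a) (max yl' a) \<union> hE a l' r' \<union> vE r' (min a yr') (max a yr')"
   and h2: "l' < r'" "yl' \<noteq> a" "yr' \<noteq> a"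
    using assms(2) by (simp_all add: UF_def)
  show ?thesis unfolding e1 e2 Int_Un_distrib Int_Un_distrib2 Un_empty de_Morgan_conj
    using h1 h2 by (auto simp: hE_hE vE_vE hE_vE vE_hE bt_def)
qed


locale Ucl =
  fixes X :: "'v set" and l r yl yr :: "'v \<Rightarrow> int" and a :: int
  assumes fin: "finite X" and ne: "X \<noteq> {}"
    and lr: "\<And>x. x \<in> X \<Longrightarrow> l x < r x"
    and yla: "\<And>x. x \<in> X \<Longrightarrow> yl x \<noteq> a"
    and yra: "\<And>x. x \<in> X \<Longrightarrow> yr x \<noteq> a"
    and cl: "\<And>x y. x \<in> X \<Longrightarrow> y \<in> X \<Longrightarrow> x \<noteq> y \<Longrightarrow>
      max (l x) (l y) < min (r x) (r y) \<or> (l x = l y \<and> bt a (yl x) = bt a (yl y))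
      \<or> (l x = r y \<and> bt a (yl x) = bt a (yr y)) \<or> (r x = l y \<and> bt a (yr x) = bt a (yl y))
      \<or> (r x = r y \<and> bt a (yr x) = bt a (yr y))"
begin

definition "LL = Max (l ` X)"
definition "RR = Min (r ` X)"
definition "tL = (if \<forall>x\<in>X. l x = LL \<longrightarrow> bt a (yl x) = TD then TD
   else if \<forall>x\<in>X. l x = LL \<longrightarrow> bt a (yl x) = TU then TU else TE)"
definition "tR = (if \<forall>x\<in>X. r x = RR \<longrightarrow> bt a (yr x) = TD then TD
   else if \<forall>x\<in>X. r x = RR \<longrightarrow> bt a (yr x) = TU then TU else TE)"
definition "TT = (tL, LL, tR, RR)"

lemma bt_ne: "bt a y \<noteq> TE" by (simp add: bt_def)

lemma L_ge: "x \<in> X \<Longrightarrow> l x \<le> LL"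
  unfolding LL_def using fin by simp
lemma L_in: "\<exists>x\<in>X. l x = LL"
proof -
  have "Max (l ` X) \<in> l ` X" using fin ne by (intro Max_in) auto
  then show ?thesis unfolding LL_def by auto
qed
lemma R_le: "x \<in> X \<Longrightarrow> RR \<le> r x"
  unfolding RR_def using fin by simp
lemma R_in: "\<exists>x\<in>X. r x = RR"
proof -
  have "Min (r ` X) \<in> r ` X" using fin ne by (intro Min_in) auto
  then show ?thesis unfolding RR_def by auto
qed

lemma tL_prop: "tL \<noteq> TE \<Longrightarrow> x \<in> X \<Longrightarrow> l x = LL \<Longrightarrow> bt a (yl x) = tL"
  unfolding tL_def by (auto split: if_splits)
lemma tR_prop: "tR \<noteq> TE \<Longrightarrow> x \<in> X \<Longrightarrow> r x = RR \<Longrightarrow> bt a (yr x) = tR"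
  unfolding tR_def by (auto split: if_splits)

lemma tL_val: assumes "\<forall>x\<in>X. l x = LL \<longrightarrow> bt a (yl x) = d" "d \<noteq> TE" shows "tL = d"
proof -
  obtain x0 where "x0 \<in> X" "l x0 = LL" using L_in by blast
  then show ?thesis using assms unfolding tL_def by (cases d) auto
qed
lemma tR_val: assumes "\<forall>x\<in>X. r x = RR \<longrightarrow> bt a (yr x) = d" "d \<noteq> TE" shows "tR = d"
proof -
  obtain x0 where "x0 \<in> X" "r x0 = RR" using R_in by blast
  then show ?thesis using assms unfolding tR_def by (cases d) auto
qed

lemma LR: "LL \<le> RR"
proof (rule ccontr)
  assume "\<not> LL \<le> RR"
  obtain x0 where x0: "x0 \<in> X" "l x0 = LL" using L_in by blast
  obtain y0 where y0: "y0 \<in> X" "r y0 = RR" using R_in by blast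
  have "x0 \<noteq> y0" using x0 y0 lr \<open>\<not> LL \<le> RR\<close> by force
  from cl[OF x0(1) y0(1) this] show False
    using x0 y0 lr[OF x0(1)] lr[OF y0(1)] \<open>\<not> LL \<le> RR\<close> L_ge[OF y0(1)] R_le[OF x0(1)] by auto
qed

lemma LeqR: assumes "LL = RR" shows "tL \<noteq> TE \<and> tL = tR"
proof -
  obtain x0 where x0: "x0 \<in> X" "l x0 = LL" using L_in by blast
  obtain y0 where y0: "y0 \<in> X" "r y0 = RR" using R_in by blast
  have "x0 \<noteq> y0" using x0 y0 lr assms by force
  from cl[OF x0(1) y0(1) this] have d: "bt a (yl x0) = bt a (yr y0)"
    using x0 y0 lr[OF x0(1)] lr[OF y0(1)] assms L_ge[OF y0(1)] R_le[OF x0(1)] by auto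
  have A: "\<forall>x\<in>X. l x = LL \<longrightarrow> bt a (yl x) = bt a (yr y0)"
  proof (intro ballI impI)
    fix x assume x: "x \<in> X" "l x = LL"
    have "x \<noteq> y0" using x y0 lr[OF y0(1)] assms by force
    from cl[OF x(1) y0(1) this] show "bt a (yl x) = bt a (yr y0)"
      using x y0 lr[OF x(1)] lr[OF y0(1)] assms R_le[OF x(1)] by auto
  qed
  have B: "\<forall>y\<in>X. r y = RR \<longrightarrow> bt a (yr y) = bt a (yr y0)"
  proof (intro ballI impI)
    fix y assume y: "y \<in> X" "r y = RR"
    have "x0 \<noteq> y" using x0 y lr[OF y(1)] assms by force
    from cl[OF x0(1) y(1) this] show "bt a (yr y) = bt a (yr y0)"
      using x0 y lr[OF x0(1)] lr[OF y(1)] assms L_ge[OF y(1)] d by auto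
  qed
  show ?thesis using tL_val[OF A bt_ne] tR_val[OF B bt_ne] bt_ne by simp
qed

lemma T_wf: "wf_tiv TT" using LR by (simp add: TT_def wf_tiv_def)

lemma T_cont: assumes x: "x \<in> X" shows "contains_ti (bt a (yl x), l x, bt a (yr x), r x) TT"
proof -
  have h: "l x \<le> LL" "RR \<le> r x" "l x < r x" "LL \<le> RR"
    using L_ge[OF x] R_le[OF x] lr[OF x] LR by auto
  have p1: "tL \<noteq> TE \<Longrightarrow> l x = LL \<Longrightarrow> bt a (yl x) = tL" using tL_prop x by blast
  have p2: "tR \<noteq> TE \<Longrightarrow> r x = RR \<Longrightarrow> bt a (yr x) = tR" using tR_prop x by blast
  have p3: "LL = RR \<Longrightarrow> tL \<noteq> TE \<and> tL = tR" using LeqR by blast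
  show ?thesis unfolding contains_ti_def coh_L_def coh_R_def TT_def
    using h p1 p2 p3 bt_ne[of "yl x"] bt_ne[of "yr x"] by (cases "LL = RR") auto
qed


definition "tu x0 c y2 = (if x0 \<le> c then (TE, x0, bt a y2, c) else (bt a y2, c, TE, x0))"
definition "adjT x0 c y2 x = (ovl x0 c (l x) (r x) \<or> (c = l x \<and> bt a y2 = bt a (yl x)) \<or> (c = r x \<and> bt a y2 = bt a (yr x)))"

lemma T_fwd: assumes x: "x \<in> X" and u: "x0 \<noteq> c" and i: "intersects_ti (tu x0 c y2) TT"
  shows "adjT x0 c y2 x"
proof -
  have h: "l x \<le> LL" "RR \<le> r x" "l x < r x" "LL \<le> RR"
    using L_ge[OF x] R_le[OF x] lr[OF x] LR by auto
  have p1: "tL \<noteq> TE \<Longrightarrow> l x = LL \<Longrightarrow> bt a (yl x) = tL" using tL_prop x by blast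
  have p2: "tR \<noteq> TE \<Longrightarrow> r x = RR \<Longrightarrow> bt a (yr x) = tR" using tR_prop x by blast
  have p3: "LL = RR \<Longrightarrow> tL \<noteq> TE \<and> tL = tR" using LeqR by blast
  show ?thesis using i unfolding adjT_def tu_def intersects_ti_def coh_L_def coh_R_def TT_def ovl_def
    using h p1 p2 p3 bt_ne[of "yl x"] bt_ne[of "yr x"] bt_ne[of y2] u
    by (cases "LL = RR"; cases "x0 \<le> c") (auto split: if_splits)
qed

lemma T_conv: assumes u: "x0 \<noteq> c" and adj: "\<forall>x\<in>X. adjT x0 c y2 x"
  shows "intersects_ti (tu x0 c y2) TT"
proof -
  have LR': "LL \<le> RR" by (rule LR)
  consider (ov) "max (min x0 c) LL < min (max x0 c) RR"
    | (inside) "LL = RR" "min x0 c < LL" "LL < max x0 c"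
    | (left) "max x0 c \<le> LL" | (right) "RR \<le> min x0 c"
  proof -
    have "max (min x0 c) LL < min (max x0 c) RR \<or> (LL = RR \<and> min x0 c < LL \<and> LL < max x0 c) \<or> max x0 c \<le> LL \<or> RR \<le> min x0 c"
      using LR' u by (cases "x0 \<le> c"; cases "LL = RR") (auto simp: min_def max_def)
    then show thesis using that by blast
  qed
  then show ?thesis
  proof cases
    case ov then show ?thesis unfolding tu_def intersects_ti_def TT_def
      by (cases "x0 \<le> c") (simp_all add: min_def max_def)
  next
    case inside then show ?thesis unfolding tu_def intersects_ti_def coh_L_def TT_def
      by (cases "x0 \<le> c") (simp_all add: min_def max_def)
  next
    case left
    obtain x1 where x1: "x1 \<in> X" "l x1 = LL" using L_in by blast
    have "adjT x0 c y2 x1" using adj x1 by blast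
    then have cL: "c = LL" using x1 left lr[OF x1(1)] unfolding adjT_def ovl_def by (auto simp: min_def max_def split: if_split_asm)
    have A: "\<forall>x\<in>X. l x = LL \<longrightarrow> bt a (yl x) = bt a y2"
    proof (intro ballI impI)
      fix x assume x: "x \<in> X" "l x = LL"
      have "adjT x0 c y2 x" using adj x by blast
      then show "bt a (yl x) = bt a y2" using x left lr[OF x(1)] cL unfolding adjT_def ovl_def
        by (auto simp: min_def max_def split: if_split_asm)
    qed
    have "tL = bt a y2" by (rule tL_val[OF A bt_ne])
    then show ?thesis using cL left u unfolding tu_def intersects_ti_def coh_R_def TT_def
      by (auto simp: bt_ne min_def max_def split: if_splits)
  next
    case right
    obtain x1 where x1: "x1 \<in> X" "r x1 = RR" using R_in by blast
    have "adjT x0 c y2 x1" using adj x1 by blast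
    then have cR: "c = RR" using x1 right lr[OF x1(1)] unfolding adjT_def ovl_def by (auto simp: min_def max_def split: if_split_asm)
    have A: "\<forall>x\<in>X. r x = RR \<longrightarrow> bt a (yr x) = bt a y2"
    proof (intro ballI impI)
      fix x assume x: "x \<in> X" "r x = RR"
      have "adjT x0 c y2 x" using adj x by blast
      then show "bt a (yr x) = bt a y2" using x right lr[OF x(1)] cR unfolding adjT_def ovl_def
        by (auto simp: min_def max_def split: if_split_asm)
    qed
    have "tR = bt a y2" by (rule tR_val[OF A bt_ne])
    then show ?thesis using cR right u unfolding tu_def intersects_ti_def coh_L_def TT_def
      by (auto simp: bt_ne min_def max_def split: if_splits)
  qed
qed


definition "CC = {c. \<forall>x\<in>X. c = l x \<or> c = r x}"
definition "farc c x = (if c = l x then yl x else yr x)"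
definition "tA c = (if \<forall>x\<in>X. c = l x then TU else if \<forall>x\<in>X. c = r x then TD else TE)"
definition "Vc c = (if \<forall>x\<in>X. bt a (farc c x) = TD then (tA c, -a, TE, - Max (farc c ` X))
   else if \<forall>x\<in>X. bt a (farc c x) = TU then (TE, - Min (farc c ` X), tA c, -a)
   else (tA c, -a, tA c, -a))"
definition "colx x c = (if c = l x then (if a < yl x then (TE, -yl x, TU, -a) else (TU, -a, TE, -yl x))
   else (if a < yr x then (TE, -yr x, TD, -a) else (TD, -a, TE, -yr x)))"

lemma CC_sub: "x0 \<in> X \<Longrightarrow> CC \<subseteq> {l x0, r x0}"
  unfolding CC_def by auto

lemma far_ne: "x \<in> X \<Longrightarrow> farc c x \<noteq> a"
  unfolding farc_def using yla yra by auto

lemma tA_TU: "tA c = TU \<Longrightarrow> x \<in> X \<Longrightarrow> c = l x"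
  unfolding tA_def by (auto split: if_splits)
lemma tA_TD: "tA c = TD \<Longrightarrow> x \<in> X \<Longrightarrow> c = r x \<and> c \<noteq> l x"
  unfolding tA_def using lr[of x] by (auto split: if_splits)

lemma mixed: assumes c: "c \<in> CC" and m1: "\<not> (\<forall>x\<in>X. bt a (farc c x) = TD)" and m2: "\<not> (\<forall>x\<in>X. bt a (farc c x) = TU)"
  shows "tA c \<noteq> TE"
proof
  assume t: "tA c = TE"
  then obtain x where x: "x \<in> X" "c \<noteq> l x" unfolding tA_def by (auto split: if_splits)
  from t obtain y where y: "y \<in> X" "c \<noteq> r y" unfolding tA_def by (auto split: if_splits)
  have xr: "c = r x" using c x unfolding CC_def by auto
  have yl': "c = l y" using c y unfolding CC_def by auto
  have key: "\<And>z w. z \<in> X \<Longrightarrow> w \<in> X \<Longrightarrow> l z = c \<Longrightarrow> r w = c \<Longrightarrow> bt a (yl z) = bt a (yr w)"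
  proof -
    fix z w assume z: "z \<in> X" "w \<in> X" "l z = c" "r w = c"
    have "z \<noteq> w" using z lr by force
    from cl[OF z(1) z(2) this] show "bt a (yl z) = bt a (yr w)" using z lr[OF z(1)] lr[OF z(2)] by auto
  qed
  have all: "\<forall>z\<in>X. bt a (farc c z) = bt a (yr x)"
  proof
    fix z assume z: "z \<in> X"
    show "bt a (farc c z) = bt a (yr x)"
    proof (cases "c = l z")
      case True then show ?thesis using key[OF z x(1) _ xr[symmetric]] by (simp add: farc_def)
    next
      case False
      then have "c = r z" using c z unfolding CC_def by auto
      then show ?thesis using key[OF y(1) z, OF yl'[symmetric]] key[OF y(1) x(1) yl'[symmetric] xr[symmetric]]
        False by (simp add: farc_def)
    qed
  qed
  show False using m1 m2 all bt_ne[of "yr x"] by (cases "bt a (yr x)") auto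
qed

lemma Max_far: "x \<in> X \<Longrightarrow> farc c x \<le> Max (farc c ` X)" using fin by simp
lemma Min_far: "x \<in> X \<Longrightarrow> Min (farc c ` X) \<le> farc c x" using fin by simp
lemma Max_far_in: "\<exists>x\<in>X. farc c x = Max (farc c ` X)"
proof -
  have "Max (farc c ` X) \<in> farc c ` X" using fin ne by (intro Max_in) auto
  then show ?thesis by auto
qed
lemma Min_far_in: "\<exists>x\<in>X. farc c x = Min (farc c ` X)"
proof -
  have "Min (farc c ` X) \<in> farc c ` X" using fin ne by (intro Min_in) auto
  then show ?thesis by auto
qed

lemma V_wf: "wf_tiv (Vc c)"
proof -
  have 1: "(\<forall>x\<in>X. bt a (farc c x) = TD) \<Longrightarrow> Max (farc c ` X) \<le> a"
    using Max_far_in[of c] by (auto simp: bt_def split: if_splits)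
  have 2: "(\<forall>x\<in>X. bt a (farc c x) = TU) \<Longrightarrow> a \<le> Min (farc c ` X)"
    using Min_far_in[of c] by (force simp: bt_def split: if_splits)
  show ?thesis unfolding Vc_def wf_tiv_def using 1 2 by auto
qed

end


definition colu :: "int \<Rightarrow> int \<Rightarrow> int \<Rightarrow> int \<Rightarrow> int \<Rightarrow> tiv" where
  "colu x0 y1 c y2 x3 = (let t1 = (if x0 < c then TD else TU); t2 = (if x3 < c then TD else TU) in
          if y2 \<le> y1 then (t1, -y1, t2, -y2) else (t2, -y2, t1, -y1))"

definition adjV :: "int \<Rightarrow> int \<Rightarrow> int \<Rightarrow> int \<Rightarrow> int \<Rightarrow> int \<Rightarrow> int \<Rightarrow> int \<Rightarrow> int \<Rightarrow> int \<Rightarrow> bool" where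
  "adjV a x0 y1 c y2 x3 l r yl yr = ((y1 = a \<and> ovl x0 c l r) \<or> (y2 = a \<and> ovl c x3 l r) \<or> (c = l \<and> ovl y1 y2 yl a) \<or> (c = r \<and> ovl y1 y2 a yr))"

lemma inter_char:
  assumes "intersects_ti (s1, al, s2, be) (p, al', q, be')" "al < be" "s1 \<noteq> TE" "s2 \<noteq> TE"
  shows "max al al' < min be be' \<or> (al < al' \<and> al' < be) \<or> (al < be' \<and> be' < be)
     \<or> (p \<noteq> TE \<and> ((p, al') = (s1, al) \<or> (p, al') = (s2, be)))
     \<or> (q \<noteq> TE \<and> ((q, be') = (s1, al) \<or> (q, be') = (s2, be)))"
  using assms(1) apply (simp only: intersects_ti_def coh_L_def coh_R_def prod.case)
  apply (elim disjE)
  using assms(2-4) by auto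

lemma colu_char:
  assumes "y1 \<noteq> y2"
  shows "\<exists>s1 s2. colu x0 y1 c y2 x3 = (s1, - max y1 y2, s2, - min y1 y2) \<and> s1 \<noteq> TE \<and> s2 \<noteq> TE
     \<and> (\<forall>s g. ((s, g) = (s1, - max y1 y2) \<or> (s, g) = (s2, - min y1 y2)) \<longleftrightarrow>
          ((g = -y1 \<and> s = (if x0 < c then TD else TU)) \<or> (g = -y2 \<and> s = (if x3 < c then TD else TU))))"
  using assms unfolding colu_def Let_def by (cases "y2 \<le> y1") auto


lemma V_fwd_gen:
  assumes u: "x0 \<noteq> c" "y1 \<noteq> y2" "x3 \<noteq> c"
    and i: "intersects_ti (colu x0 y1 c y2 x3) (p, al', q, be')"
  shows "max (- max y1 y2) al' < min (- min y1 y2) be' \<or> (- max y1 y2 < al' \<and> al' < - min y1 y2)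
     \<or> (- max y1 y2 < be' \<and> be' < - min y1 y2)
     \<or> (p \<noteq> TE \<and> ((al' = -y1 \<and> p = (if x0 < c then TD else TU)) \<or> (al' = -y2 \<and> p = (if x3 < c then TD else TU))))
     \<or> (q \<noteq> TE \<and> ((be' = -y1 \<and> q = (if x0 < c then TD else TU)) \<or> (be' = -y2 \<and> q = (if x3 < c then TD else TU))))"
proof -
  obtain s1 s2 where cu: "colu x0 y1 c y2 x3 = (s1, - max y1 y2, s2, - min y1 y2)" "s1 \<noteq> TE" "s2 \<noteq> TE"
    and e: "\<forall>s g. ((s, g) = (s1, - max y1 y2) \<or> (s, g) = (s2, - min y1 y2)) \<longleftrightarrow>
          ((g = -y1 \<and> s = (if x0 < c then TD else TU)) \<or> (g = -y2 \<and> s = (if x3 < c then TD else TU)))"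
    using colu_char[OF u(2)] by blast
  have lt: "- max y1 y2 < - min y1 y2" using u(2) by (simp add: min_def max_def)
  from inter_char[OF i[unfolded cu(1)] lt cu(2) cu(3)]
  show ?thesis using e[rule_format, of p al'] e[rule_format, of q be'] by blast
qed

lemma VD_fwd:
  fixes l r yl yr M a c x0 y1 y2 x3 :: int and t :: ttype
  assumes "c = l \<or> c = r" "l < r" "(if c = l then yl else yr) \<le> M" "M < a"
    "t = TU \<longrightarrow> c = l" "t = TD \<longrightarrow> c = r \<and> c \<noteq> l" "x0 \<noteq> c" "y1 \<noteq> y2" "x3 \<noteq> c"
    "intersects_ti (colu x0 y1 c y2 x3) (t, -a, TE, -M)"
  shows "adjV a x0 y1 c y2 x3 l r yl yr"
proof -
  from V_fwd_gen[OF assms(7-10)]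
  have k: "max (min y1 y2) M < min (max y1 y2) a \<or> (min y1 y2 < a \<and> a < max y1 y2) \<or> (min y1 y2 < M \<and> M < max y1 y2)
     \<or> (t \<noteq> TE \<and> ((a = y1 \<and> t = (if x0 < c then TD else TU)) \<or> (a = y2 \<and> t = (if x3 < c then TD else TU))))"
    using assms(4) by (auto simp: min_def max_def split: if_splits)
  show ?thesis using k assms(1-9) unfolding adjV_def ovl_def
    by (cases "c = l") (auto simp: min_def max_def split: if_splits)
qed

lemma VU_fwd:
  fixes l r yl yr M a c x0 y1 y2 x3 :: int and t :: ttype
  assumes "c = l \<or> c = r" "l < r" "M \<le> (if c = l then yl else yr)" "a < M"
    "t = TU \<longrightarrow> c = l" "t = TD \<longrightarrow> c = r \<and> c \<noteq> l" "x0 \<noteq> c" "y1 \<noteq> y2" "x3 \<noteq> c"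
    "intersects_ti (colu x0 y1 c y2 x3) (TE, -M, t, -a)"
  shows "adjV a x0 y1 c y2 x3 l r yl yr"
proof -
  from V_fwd_gen[OF assms(7-10)]
  have k: "max (min y1 y2) a < min (max y1 y2) M \<or> (min y1 y2 < a \<and> a < max y1 y2) \<or> (min y1 y2 < M \<and> M < max y1 y2)
     \<or> (t \<noteq> TE \<and> ((a = y1 \<and> t = (if x0 < c then TD else TU)) \<or> (a = y2 \<and> t = (if x3 < c then TD else TU))))"
    using assms(4) by (auto simp: min_def max_def split: if_splits)
  show ?thesis using k assms(1-9) unfolding adjV_def ovl_def
    by (cases "c = l") (auto simp: min_def max_def split: if_splits)
qed

lemma VM_fwd:
  fixes l r yl yr a c x0 y1 y2 x3 :: int and t :: ttype
  assumes "c = l \<or> c = r" "l < r" "(if c = l then yl else yr) \<noteq> a" "t \<noteq> TE"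
    "t = TU \<longrightarrow> c = l" "t = TD \<longrightarrow> c = r \<and> c \<noteq> l" "x0 \<noteq> c" "y1 \<noteq> y2" "x3 \<noteq> c"
    "intersects_ti (colu x0 y1 c y2 x3) (t, -a, t, -a)"
  shows "adjV a x0 y1 c y2 x3 l r yl yr"
proof -
  from V_fwd_gen[OF assms(7-10)]
  have k: "(min y1 y2 < a \<and> a < max y1 y2)
     \<or> ((a = y1 \<and> t = (if x0 < c then TD else TU)) \<or> (a = y2 \<and> t = (if x3 < c then TD else TU)))"
    using assms(4) by (simp add: min_def max_def split: if_splits) linarith?
  show ?thesis using k assms(1-9) unfolding adjV_def ovl_def
    by (cases "c = l") (auto simp: min_def max_def split: if_splits)
qed

context Ucl
begin

lemma farc_cases: "x \<in> X \<Longrightarrow> c \<in> CC \<Longrightarrow> c = l x \<or> c = r x"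
  unfolding CC_def by auto

lemma allD_Max: "\<forall>x\<in>X. bt a (farc c x) = TD \<Longrightarrow> Max (farc c ` X) < a"
  using Max_far_in[of c] by (force simp: bt_def split: if_splits)
lemma allU_Min: "\<forall>x\<in>X. bt a (farc c x) = TU \<Longrightarrow> a < Min (farc c ` X)"
proof -
  assume h: "\<forall>x\<in>X. bt a (farc c x) = TU"
  obtain z where z: "z \<in> X" "farc c z = Min (farc c ` X)" using Min_far_in by blast
  then show ?thesis using h far_ne[OF z(1), of c] by (force simp: bt_def split: if_splits)
qed

lemma cont_D: "f \<le> M \<Longrightarrow> M < a \<Longrightarrow> tx \<noteq> TE \<Longrightarrow> (t \<noteq> TE \<longrightarrow> t = tx) \<Longrightarrow>
   contains_ti (tx, -a, TE, -f) (t, -a, TE, -M)"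
  unfolding contains_ti_def coh_L_def coh_R_def by (cases t) auto
lemma cont_U: "M \<le> f \<Longrightarrow> a < M \<Longrightarrow> tx \<noteq> TE \<Longrightarrow> (t \<noteq> TE \<longrightarrow> t = tx) \<Longrightarrow>
   contains_ti (TE, -f, tx, -a) (TE, -M, t, -a)"
  unfolding contains_ti_def coh_L_def coh_R_def by (cases t) auto
lemma cont_M: "f \<noteq> a \<Longrightarrow> tx \<noteq> TE \<Longrightarrow>
   contains_ti (if a < f then (TE, -f, tx, -a) else (tx, -a, TE, -f)) (tx, -a, tx, -a)"
  unfolding contains_ti_def coh_L_def coh_R_def by auto

lemma colx_eq: "colx x c = (if a < farc c x then (TE, - farc c x, (if c = l x then TU else TD), -a)
     else ((if c = l x then TU else TD), -a, TE, - farc c x))"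
  unfolding colx_def farc_def by auto

lemma tA_eq: "x \<in> X \<Longrightarrow> tA c \<noteq> TE \<Longrightarrow> tA c = (if c = l x then TU else TD)"
  using tA_TU[of c x] tA_TD[of c x] by (cases "tA c") auto

lemma V_cont: assumes c: "c \<in> CC" and x: "x \<in> X" shows "contains_ti (colx x c) (Vc c)"
proof -
  have f: "farc c x \<noteq> a" using far_ne[OF x] .
  have tx: "(if c = l x then TU else TD) \<noteq> TE" by simp
  have te: "tA c \<noteq> TE \<longrightarrow> tA c = (if c = l x then TU else TD)" using tA_eq[OF x] by blast
  consider (D) "\<forall>x\<in>X. bt a (farc c x) = TD" | (U) "\<not> (\<forall>x\<in>X. bt a (farc c x) = TD)" "\<forall>x\<in>X. bt a (farc c x) = TU"
    | (M) "\<not> (\<forall>x\<in>X. bt a (farc c x) = TD)" "\<not> (\<forall>x\<in>X. bt a (farc c x) = TU)" by blast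
  then show ?thesis
  proof cases
    case D
    have m: "farc c x \<le> Max (farc c ` X)" "Max (farc c ` X) < a" using Max_far[OF x] allD_Max[OF D] by auto
    have v: "Vc c = (tA c, -a, TE, - Max (farc c ` X))" using D by (simp add: Vc_def)
    have "\<not> a < farc c x" using m by simp
    then show ?thesis unfolding v colx_eq using cont_D[OF m tx te] by simp
  next
    case U
    have m: "Min (farc c ` X) \<le> farc c x" "a < Min (farc c ` X)" using Min_far[OF x] allU_Min[OF U(2)] by auto
    have v: "Vc c = (TE, - Min (farc c ` X), tA c, -a)" using U by (simp add: Vc_def)
    have "a < farc c x" using m by simp
    then show ?thesis unfolding v colx_eq using cont_U[OF m tx te] by simp
  next
    case M
    have t: "tA c \<noteq> TE" using mixed[OF c M] .
    have v: "Vc c = (tA c, -a, tA c, -a)" unfolding Vc_def by (simp only: M if_False)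
    have "tA c = (if c = l x then TU else TD)" using te t by blast
    then show ?thesis unfolding v colx_eq using cont_M[OF f tx] by simp
  qed
qed

lemma V_fwd: assumes c: "c \<in> CC" and x: "x \<in> X" and u: "x0 \<noteq> c" "y1 \<noteq> y2" "x3 \<noteq> c"
  and i: "intersects_ti (colu x0 y1 c y2 x3) (Vc c)"
  shows "adjV a x0 y1 c y2 x3 (l x) (r x) (yl x) (yr x)"
proof -
  have cx: "c = l x \<or> c = r x" using farc_cases[OF x c] .
  have lrx: "l x < r x" using lr[OF x] .
  have f: "(if c = l x then yl x else yr x) \<noteq> a" using far_ne[OF x] by (simp add: farc_def)
  have tU: "tA c = TU \<longrightarrow> c = l x" using tA_TU x by blast
  have tD: "tA c = TD \<longrightarrow> c = r x \<and> c \<noteq> l x" using tA_TD x by blast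
  consider (D) "\<forall>x\<in>X. bt a (farc c x) = TD" | (U) "\<not> (\<forall>x\<in>X. bt a (farc c x) = TD)" "\<forall>x\<in>X. bt a (farc c x) = TU"
    | (M) "\<not> (\<forall>x\<in>X. bt a (farc c x) = TD)" "\<not> (\<forall>x\<in>X. bt a (farc c x) = TU)" by blast
  then show ?thesis
  proof cases
    case D
    have m: "(if c = l x then yl x else yr x) \<le> Max (farc c ` X)" "Max (farc c ` X) < a"
      using Max_far[OF x] allD_Max[OF D] by (auto simp: farc_def)
    have v: "Vc c = (tA c, -a, TE, - Max (farc c ` X))" using D by (simp add: Vc_def)
    show ?thesis by (rule VD_fwd[OF cx lrx m tU tD u i[unfolded v]])
  next
    case U
    have m: "Min (farc c ` X) \<le> (if c = l x then yl x else yr x)" "a < Min (farc c ` X)"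
      using Min_far[OF x] allU_Min[OF U(2)] by (auto simp: farc_def)
    have v: "Vc c = (TE, - Min (farc c ` X), tA c, -a)" using U by (simp add: Vc_def)
    show ?thesis by (rule VU_fwd[OF cx lrx m tU tD u i[unfolded v]])
  next
    case M
    have t: "tA c \<noteq> TE" using mixed[OF c M] .
    have v: "Vc c = (tA c, -a, tA c, -a)" unfolding Vc_def by (simp only: M if_False)
    show ?thesis by (rule VM_fwd[OF cx lrx f t tU tD u i[unfolded v]])
  qed
qed


lemma V_conv: assumes u: "x0 \<noteq> c" "y1 \<noteq> y2" "x3 \<noteq> c" "y1 \<noteq> a" "y2 \<noteq> a"
  and adj: "\<forall>x\<in>X. adjV a x0 y1 c y2 x3 (l x) (r x) (yl x) (yr x)"
  shows "c \<in> CC \<and> intersects_ti (colu x0 y1 c y2 x3) (Vc c)"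
proof -
  have ax: "(c = l x \<and> ovl y1 y2 (yl x) a) \<or> (c = r x \<and> ovl y1 y2 a (yr x))" if x: "x \<in> X" for x
    using adj x u(4,5) unfolding adjV_def by auto
  have cC: "c \<in> CC" unfolding CC_def using ax by blast
  have hf: "ovl y1 y2 (farc c x) a" if x: "x \<in> X" for x
    using ax[OF x] lr[OF x] unfolding farc_def ovl_def by (auto simp: min_def max_def split: if_splits)
  obtain s1 s2 where cu: "colu x0 y1 c y2 x3 = (s1, - max y1 y2, s2, - min y1 y2)"
    using colu_char[OF u(2)] by blast
  consider (mid) "min y1 y2 < a" "a < max y1 y2" | (above) "a < min y1 y2" | (below) "max y1 y2 < a"
  proof -
    have "(min y1 y2 < a \<and> a < max y1 y2) \<or> a < min y1 y2 \<or> max y1 y2 < a"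
      using u(4,5) by (cases "y1 \<le> y2"; simp add: min_def max_def; linarith)
    then show thesis using that by blast
  qed
  then have "intersects_ti (colu x0 y1 c y2 x3) (Vc c)"
  proof cases
    case mid
    then show ?thesis unfolding cu Vc_def intersects_ti_def coh_L_def coh_R_def by auto
  next
    case above
    have g: "min y1 y2 < farc c x" if x: "x \<in> X" for x
      using hf[OF x] above unfolding ovl_def by (auto simp: min_def max_def split: if_splits)
    obtain z0 where z0: "z0 \<in> X" using ne by blast
    have nD: "\<not> (\<forall>x\<in>X. bt a (farc c x) = TD)"
    proof
      assume "\<forall>x\<in>X. bt a (farc c x) = TD"
      then have "bt a (farc c z0) = TD" using z0 by blast
      then show False using g[OF z0] above by (simp add: bt_def split: if_splits)
    qed
    have aU: "\<forall>x\<in>X. bt a (farc c x) = TU" using g above by (force simp: bt_def)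
    obtain z where z: "z \<in> X" "farc c z = Min (farc c ` X)" using Min_far_in by blast
    have mn: "min y1 y2 < Min (farc c ` X)" using g[OF z(1)] z(2) by simp
    have v: "Vc c = (TE, - Min (farc c ` X), tA c, -a)" unfolding Vc_def by (subst if_not_P[OF nD], subst if_P[OF aU], rule refl)
    show ?thesis unfolding cu v intersects_ti_def using mn above u(2) by (auto simp: min_def max_def)
  next
    case below
    have g: "farc c x < max y1 y2" if x: "x \<in> X" for x
      using hf[OF x] below unfolding ovl_def by (auto simp: min_def max_def split: if_splits)
    have aD: "\<forall>x\<in>X. bt a (farc c x) = TD" using g below by (force simp: bt_def)
    obtain z where z: "z \<in> X" "farc c z = Max (farc c ` X)" using Max_far_in by blast
    have mx: "Max (farc c ` X) < max y1 y2" using g[OF z(1)] z(2) by simp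
    have v: "Vc c = (tA c, -a, TE, - Max (farc c ` X))" unfolding Vc_def by (subst if_P[OF aD], rule refl)
    show ?thesis unfolding cu v intersects_ti_def using mx below u(2) by (auto simp: min_def max_def)
  qed
  with cC show ?thesis by blast
qed

end


lemma ovl_bt1: "y \<noteq> a \<Longrightarrow> y' \<noteq> a \<Longrightarrow> ovl a y y' a \<longleftrightarrow> bt a y = bt a y'"
  unfolding ovl_def bt_def by (auto simp: min_def max_def)
lemma ovl_bt2: "y \<noteq> a \<Longrightarrow> y' \<noteq> a \<Longrightarrow> ovl a y a y' \<longleftrightarrow> bt a y = bt a y'"
  unfolding ovl_def bt_def by (auto simp: min_def max_def)

lemma adjV_adjT:
  assumes "y2 \<noteq> a" "yl \<noteq> a" "yr \<noteq> a"
  shows "adjV a x0 a c y2 x3 l r yl yr \<longleftrightarrow> (ovl x0 c l r \<or> (c = l \<and> bt a y2 = bt a yl) \<or> (c = r \<and> bt a y2 = bt a yr))"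
  unfolding adjV_def using assms ovl_bt1[of y2 a yl] ovl_bt2[of y2 a yr] by auto

theorem lemma11:
  fixes V :: "'v set" and E :: "'v \<Rightarrow> 'v \<Rightarrow> bool" and P :: "'v \<Rightarrow> pt list"
    and a :: int and X :: "'v set"
  assumes "finite V"
    and "epg_rep V E P"
    and "X \<subseteq> V" and "X \<noteq> {}"
    and "\<forall>u\<in>X. \<forall>v\<in>X. u \<noteq> v \<longrightarrow> E u v"
    and "\<forall>u\<in>X. U_vertex (P u) \<and> row_index (P u) = {a}"
  shows "\<exists>S :: ltiv set. finite S \<and> card S \<le> 3
           \<and> (\<forall>s\<in>S. wf_tiv (snd (snd s)))
           \<and> (\<exists>t. {s\<in>S. fst s = Hor} = {(Hor, a, t)})
           \<and> card {s\<in>S. fst s = Ver} \<le> 2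
           \<and> (\<forall>x\<in>X. \<forall>s\<in>S. v_contains (P x) s)
           \<and> (\<forall>u\<in>V. Z_vertex (P u) \<longrightarrow> ((\<forall>x\<in>X. E u x) \<longleftrightarrow> (\<exists>s\<in>S. v_intersects (P u) s)))"
proof -
  have B2: "\<And>u. u \<in> V \<Longrightarrow> is_B2_path (P u)" using assms(2) by (auto simp: epg_rep_def)
  have Eiff: "\<And>u v. u \<in> V \<Longrightarrow> v \<in> V \<Longrightarrow> u \<noteq> v \<Longrightarrow> E u v \<longleftrightarrow> path_edges (P u) \<inter> path_edges (P v) \<noteq> {}"
    using assms(2) by (auto simp: epg_rep_def)
  have ex: "\<forall>x\<in>X. \<exists>q. UF a (P x) (fst q) (fst (snd q)) (fst (snd (snd q))) (snd (snd (snd q)))"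
  proof
    fix x assume x: "x \<in> X"
    have "is_B2_path (P x)" using B2 assms(3) x by auto
    then obtain l r yl yr where "UF a (P x) l r yl yr" using U_norm assms(6) x by blast
    then show "\<exists>q. UF a (P x) (fst q) (fst (snd q)) (fst (snd (snd q))) (snd (snd (snd q)))"
      by (intro exI[of _ "(l, r, yl, yr)"]) simp
  qed
  from bchoice[OF ex] obtain q where q: "\<forall>x\<in>X. UF a (P x) (fst (q x)) (fst (snd (q x))) (fst (snd (snd (q x)))) (snd (snd (snd (q x))))"
    by blast
  define l where "l x = fst (q x)" for x
  define r where "r x = fst (snd (q x))" for x
  define yl where "yl x = fst (snd (snd (q x)))" for x
  define yr where "yr x = snd (snd (snd (q x)))" for x
  have UFx: "\<And>x. x \<in> X \<Longrightarrow> UF a (P x) (l x) (r x) (yl x) (yr x)"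
    using q unfolding l_def r_def yl_def yr_def by blast
  interpret Ucl X l r yl yr a
  proof
    show "finite X" using assms(1,3) finite_subset by blast
    show "X \<noteq> {}" by (rule assms(4))
    show "\<And>x. x \<in> X \<Longrightarrow> l x < r x" "\<And>x. x \<in> X \<Longrightarrow> yl x \<noteq> a" "\<And>x. x \<in> X \<Longrightarrow> yr x \<noteq> a"
      using UFx by (auto simp: UF_def)
    fix x y assume xy: "x \<in> X" "y \<in> X" "x \<noteq> y"
    have "path_edges (P x) \<inter> path_edges (P y) \<noteq> {}"
      using assms(5) xy Eiff[of x y] assms(3) by auto
    then show "max (l x) (l y) < min (r x) (r y) \<or> (l x = l y \<and> bt a (yl x) = bt a (yl y))
      \<or> (l x = r y \<and> bt a (yl x) = bt a (yr y)) \<or> (r x = l y \<and> bt a (yr x) = bt a (yl y))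
      \<or> (r x = r y \<and> bt a (yr x) = bt a (yr y))"
      using UU_adj[OF UFx[OF xy(1)] UFx[OF xy(2)]] by blast
  qed
  obtain x0 where x0: "x0 \<in> X" using assms(4) by blast
  have CCs: "CC \<subseteq> {l x0, r x0}" by (rule CC_sub[OF x0])
  have finCC: "finite CC" using CCs finite_subset by blast
  have c2: "card {l x0, r x0} \<le> 2" by (cases "l x0 = r x0") auto
  have cardCC: "card CC \<le> 2" using card_mono[OF _ CCs] c2 by simp
  define S where "S = insert (Hor, a, TT) ((\<lambda>c. (Ver, c, Vc c)) ` CC)"
  have SH: "{s\<in>S. fst s = Hor} = {(Hor, a, TT)}" unfolding S_def by auto
  have SV: "{s\<in>S. fst s = Ver} = (\<lambda>c. (Ver, c, Vc c)) ` CC" unfolding S_def by auto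
  have cV: "card {s\<in>S. fst s = Ver} \<le> 2" unfolding SV using card_image_le[OF finCC] cardCC le_trans by blast
  have finS: "finite S" unfolding S_def using finCC by simp
  have cS: "card S \<le> 3"
  proof -
    have "card S \<le> Suc (card ((\<lambda>c. (Ver, c, Vc c)) ` CC))" unfolding S_def by (rule card_insert_le_m1) simp_all
    then show ?thesis using cV SV by simp
  qed
  have wfS: "\<forall>s\<in>S. wf_tiv (snd (snd s))" unfolding S_def using T_wf V_wf by auto
  have contS: "\<forall>x\<in>X. \<forall>s\<in>S. v_contains (P x) s"
  proof (intro ballI)
    fix x s assume x: "x \<in> X" and s: "s \<in> S"
    have U: "UF a (P x) (l x) (r x) (yl x) (yr x)" by (rule UFx[OF x])
    show "v_contains (P x) s"
    proof (cases "s = (Hor, a, TT)")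
      case True
      then show ?thesis using U T_cont[OF x] by (simp add: UF_def)
    next
      case False
      then obtain c where c: "c \<in> CC" "s = (Ver, c, Vc c)" using s unfolding S_def by auto
      have cx: "c = l x \<or> c = r x" using farc_cases[OF x c(1)] .
      have "tproj_col (P x) c = colx x c" using U cx lr[OF x] unfolding UF_def colx_def by auto
      then show ?thesis using U cx V_cont[OF c(1) x] c(2) by (auto simp: UF_def)
    qed
  qed
  have iffS: "\<forall>u\<in>V. Z_vertex (P u) \<longrightarrow> ((\<forall>x\<in>X. E u x) \<longleftrightarrow> (\<exists>s\<in>S. v_intersects (P u) s))"
  proof (intro ballI impI)
    fix u assume u: "u \<in> V" and Z: "Z_vertex (P u)"
    obtain x0' y1' c y2' x3' where Z0: "ZF (P u) x0' y1' c y2' x3'" using Z_norm[OF B2[OF u] Z] by blast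
    obtain x0 y1 y2 x3 where ZF: "ZF (P u) x0 y1 c y2 x3" and ya: "y1 = a \<or> (y1 \<noteq> a \<and> y2 \<noteq> a)"
    proof (cases "y2' = a")
      case True then show ?thesis using that ZF_sym[OF Z0] by blast
    next
      case False then show ?thesis using that Z0 by blast
    qed
    have zf: "x0 \<noteq> c" "y1 \<noteq> y2" "x3 \<noteq> c" "row_index (P u) = {y1, y2}" "col_index (P u) = {c}"
      "tproj_row (P u) y1 = (if x0 \<le> c then (TE, x0, bt y1 y2, c) else (bt y1 y2, c, TE, x0))"
      "tproj_col (P u) c = colu x0 y1 c y2 x3"
      using ZF unfolding ZF_def colu_def by auto
    have ux: "u \<notin> X"
    proof
      assume "u \<in> X"
      then have "card (row_index (P u)) = 1" using assms(6) by (simp add: U_vertex_def)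
      then show False using Z by (simp add: Z_vertex_def)
    qed
    have adj: "E u x \<longleftrightarrow> adjV a x0 y1 c y2 x3 (l x) (r x) (yl x) (yr x)" if x: "x \<in> X" for x
    proof -
      have "u \<noteq> x" using ux x by blast
      then have "E u x \<longleftrightarrow> path_edges (P u) \<inter> path_edges (P x) \<noteq> {}" using Eiff[of u x] u x assms(3) by auto
      also have "\<dots> \<longleftrightarrow> adjV a x0 y1 c y2 x3 (l x) (r x) (yl x) (yr x)"
        unfolding adjV_def by (rule ZU_adj[OF ZF UFx[OF x]])
      finally show ?thesis .
    qed
    have intS: "(\<exists>s\<in>S. v_intersects (P u) s) \<longleftrightarrow>
        (a \<in> {y1, y2} \<and> intersects_ti (tproj_row (P u) a) TT) \<or> (c \<in> CC \<and> intersects_ti (colu x0 y1 c y2 x3) (Vc c))"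
      unfolding S_def using zf by auto
    show "(\<forall>x\<in>X. E u x) \<longleftrightarrow> (\<exists>s\<in>S. v_intersects (P u) s)"
    proof (cases "y1 = a")
      case True
      have y2a: "y2 \<noteq> a" using zf(2) True by simp
      have tr: "tproj_row (P u) a = tu x0 c y2" using zf(6) True by (simp add: tu_def)
      have aT: "adjV a x0 y1 c y2 x3 (l x) (r x) (yl x) (yr x) \<longleftrightarrow> adjT x0 c y2 x" if x: "x \<in> X" for x
        unfolding True adjT_def using adjV_adjT[OF y2a yla[OF x] yra[OF x]] by simp
      show ?thesis
      proof
        assume "\<forall>x\<in>X. E u x"
        then have "\<forall>x\<in>X. adjT x0 c y2 x" using adj aT by blast
        then have "intersects_ti (tu x0 c y2) TT" by (rule T_conv[OF zf(1)])
        then show "\<exists>s\<in>S. v_intersects (P u) s" unfolding intS tr using True by simp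
      next
        assume "\<exists>s\<in>S. v_intersects (P u) s"
        then have "intersects_ti (tu x0 c y2) TT \<or> (c \<in> CC \<and> intersects_ti (colu x0 y1 c y2 x3) (Vc c))"
          unfolding intS tr using True by simp
        then show "\<forall>x\<in>X. E u x"
        proof
          assume "intersects_ti (tu x0 c y2) TT"
          then show ?thesis using T_fwd[OF _ zf(1)] adj aT by blast
        next
          assume "c \<in> CC \<and> intersects_ti (colu x0 y1 c y2 x3) (Vc c)"
          then show ?thesis using V_fwd[OF _ _ zf(1-3)] adj by blast
        qed
      qed
    next
      case False
      have na: "y1 \<noteq> a" "y2 \<noteq> a" using ya False by auto
      have intS': "(\<exists>s\<in>S. v_intersects (P u) s) \<longleftrightarrow> (c \<in> CC \<and> intersects_ti (colu x0 y1 c y2 x3) (Vc c))"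
        unfolding intS using na by auto
      show ?thesis unfolding intS'
      proof
        assume "\<forall>x\<in>X. E u x"
        then have "\<forall>x\<in>X. adjV a x0 y1 c y2 x3 (l x) (r x) (yl x) (yr x)" using adj by blast
        then show "c \<in> CC \<and> intersects_ti (colu x0 y1 c y2 x3) (Vc c)" by (rule V_conv[OF zf(1-3) na])
      next
        assume "c \<in> CC \<and> intersects_ti (colu x0 y1 c y2 x3) (Vc c)"
        then show "\<forall>x\<in>X. E u x" using V_fwd[OF _ _ zf(1-3)] adj by blast
      qed
    qed
  qed
  show ?thesis
    using finS cS wfS SH cV contS iffS by blast
qed

end
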